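(* Let $(g(x))_{x\ge0}$ be a semigroup acting on a real finite-dimensional vector space $V$, let $V=\bigoplus_{i=1}^nV_i$ be an SRPD, and suppose that for some component $V_i$ and some $x_0>0$ the map $g(x_0)|_{V_i}$ has eigenvalue $0$. Then $g(x)|_{V_i}$ has $0$ as its only eigenvalue for every $x>0$, and $V_i\subseteq\ker g(x)$ for all $x>0$.
   Context: A semigroup is a map $g:[0,\infty)\to L(V)$ with $g(0)=\mathrm{id}$ and $g(x+y)=g(x)g(y)$ for all $x,y\ge0$. A simultaneous real primary decomposition (SRPD) is a decomposition $V=\bigoplus_{i=1}^nV_i$ into nonzero subspaces, each $g(x)$-invariant for all $x\ge0$, such that each $V_i$ is either of first type: for every $x\ge0$, $g(x)|_{V_i}$ has exactly one (complex) eigenvalue $\lambda(x)$, which is real and $\ge0$; or of second type: for every $x\ge 0$ the eigenvalues of $g(x)|_{V_i}$ lie in $\{\lambda(x),\overline{\lambda(x)}\}$ for some $\lambda(x)\in\mathbb C$, with $\lambda(x)\notin\mathbb R$ for some $x$. *)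

theory Defs
  imports "HOL-Analysis.Analysis"
begin

definition semigroup :: "(real \<Rightarrow> 'a::euclidean_space \<Rightarrow> 'a) \<Rightarrow> bool" where
  "semigroup g \<longleftrightarrow> (\<forall>x\<ge>0. linear (g x)) \<and> g 0 = id \<and>
     (\<forall>x y. x \<ge> 0 \<longrightarrow> y \<ge> 0 \<longrightarrow> g (x + y) = g x \<circ> g y)"

text \<open>lam is a (complex) eigenvalue of the restriction of the real linear map T to the
invariant subspace W, i.e. an eigenvalue of the complexification of T restricted to W:
there is a nonzero u + i v (u, v in W) with T(u + i v) = lam (u + i v).\<close>
definition restr_eigenvalue :: "('a::euclidean_space \<Rightarrow> 'a) \<Rightarrow> 'a set \<Rightarrow> complex \<Rightarrow> bool" where
  "restr_eigenvalue T W lam \<longleftrightarrow>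
     (\<exists>u v. u \<in> W \<and> v \<in> W \<and> (u \<noteq> 0 \<or> v \<noteq> 0) \<and>
        T u = Re lam *\<^sub>R u - Im lam *\<^sub>R v \<and>
        T v = Im lam *\<^sub>R u + Re lam *\<^sub>R v)"

definition restr_spectrum :: "('a::euclidean_space \<Rightarrow> 'a) \<Rightarrow> 'a set \<Rightarrow> complex set" where
  "restr_spectrum T W = {lam. restr_eigenvalue T W lam}"

definition direct_sum :: "nat \<Rightarrow> (nat \<Rightarrow> 'a::euclidean_space set) \<Rightarrow> bool" where
  "direct_sum n Vs \<longleftrightarrow> (\<forall>i\<in>{1..n}. subspace (Vs i)) \<and>
     (\<forall>v. \<exists>!w. (\<forall>i. (i \<in> {1..n} \<longrightarrow> w i \<in> Vs i) \<and> (i \<notin> {1..n} \<longrightarrow> w i = 0))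
               \<and> v = (\<Sum>i\<in>{1..n}. w i))"

definition first_type :: "(real \<Rightarrow> 'a::euclidean_space \<Rightarrow> 'a) \<Rightarrow> 'a set \<Rightarrow> bool" where
  "first_type g W \<longleftrightarrow>
     (\<forall>x\<ge>0. \<exists>r::real. r \<ge> 0 \<and> restr_spectrum (g x) W = {complex_of_real r})"

definition second_type :: "(real \<Rightarrow> 'a::euclidean_space \<Rightarrow> 'a) \<Rightarrow> 'a set \<Rightarrow> bool" where
  "second_type g W \<longleftrightarrow>
     (\<exists>lam::real \<Rightarrow> complex.
        (\<forall>x\<ge>0. restr_spectrum (g x) W \<subseteq> {lam x, cnj (lam x)}) \<and>
        (\<exists>x\<ge>0. lam x \<notin> \<real>))"

definition SRPD :: "(real \<Rightarrow> 'a::euclidean_space \<Rightarrow> 'a) \<Rightarrow> nat \<Rightarrow> (nat \<Rightarrow> 'a set) \<Rightarrow> bool" where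
  "SRPD g n Vs \<longleftrightarrow> direct_sum n Vs \<and>
     (\<forall>i\<in>{1..n}. Vs i \<noteq> {0} \<and> (\<forall>x\<ge>0. g x ` Vs i \<subseteq> Vs i) \<and>
        (first_type g (Vs i) \<or> second_type g (Vs i)))"

end

theory Submission imports Defs "HOL-Computational_Algebra.Fundamental_Theorem_Algebra" begin

definition ev :: "real poly \<Rightarrow> ('a::real_vector \<Rightarrow> 'a) \<Rightarrow> 'a \<Rightarrow> 'a" where
  "ev p T w = (\<Sum>i\<le>degree p. coeff p i *\<^sub>R (T^^i) w)"

lemma ev_bound:
  assumes "degree p \<le> n"
  shows "ev p T w = (\<Sum>i\<le>n. coeff p i *\<^sub>R (T^^i) w)"
  unfolding ev_def
  by (rule sum.mono_neutral_left) (use assms in \<open>auto simp: coeff_eq_0\<close>)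

lemma ev_0 [simp]: "ev 0 T w = 0"
  by (simp add: ev_def)

lemma ev_add: "ev (p + q) T w = ev p T w + ev q T w"
proof -
  let ?n = "max (degree p) (degree q)"
  have "ev (p+q) T w = (\<Sum>i\<le>?n. coeff (p+q) i *\<^sub>R (T^^i) w)"
    by (rule ev_bound) (simp add: degree_add_le)
  also have "\<dots> = (\<Sum>i\<le>?n. coeff p i *\<^sub>R (T^^i) w) + (\<Sum>i\<le>?n. coeff q i *\<^sub>R (T^^i) w)"
    by (simp add: scaleR_add_left sum.distrib)
  also have "\<dots> = ev p T w + ev q T w"
    using ev_bound[of p ?n T w] ev_bound[of q ?n T w] by simp
  finally show ?thesis .
qed

lemma ev_smult: "ev (smult a p) T w = a *\<^sub>R ev p T w"
proof -
  have "ev (smult a p) T w = (\<Sum>i\<le>degree p. coeff (smult a p) i *\<^sub>R (T^^i) w)"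
    by (rule ev_bound) (simp add: degree_smult_le)
  then show ?thesis by (simp add: ev_def scaleR_sum_right)
qed

lemma ev_pCons:
  assumes "linear T"
  shows "ev (pCons a p) T w = a *\<^sub>R w + T (ev p T w)"
proof -
  have "ev (pCons a p) T w = (\<Sum>i\<le>Suc (degree p). coeff (pCons a p) i *\<^sub>R (T^^i) w)"
    by (rule ev_bound) (simp add: degree_pCons_le)
  also have "\<dots> = a *\<^sub>R w + (\<Sum>i\<le>degree p. coeff p i *\<^sub>R (T^^Suc i) w)"
    unfolding sum.atMost_Suc_shift by simp
  also have "(\<Sum>i\<le>degree p. coeff p i *\<^sub>R (T^^Suc i) w) = T (ev p T w)"
    unfolding ev_def using assms
    by (simp add: linear_sum linear_scale)
  finally show ?thesis .
qed

lemma ev_mult: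
  assumes "linear T"
  shows "ev (p * q) T w = ev p T (ev q T w)"
proof (induction p rule: pCons_induct)
  case 0
  then show ?case by simp
next
  case (pCons a p)
  have "ev (pCons a p * q) T w = ev (smult a q + pCons 0 (p * q)) T w"
    by simp
  also have "\<dots> = a *\<^sub>R ev q T w + T (ev p T (ev q T w))"
    using assms pCons.IH by (simp add: ev_add ev_smult ev_pCons)
  also have "\<dots> = ev (pCons a p) T (ev q T w)"
    using assms by (simp add: ev_pCons)
  finally show ?case .
qed

lemma funpow_in:
  assumes "\<And>x. x \<in> U \<Longrightarrow> T x \<in> U" "w \<in> U"
  shows "(T^^i) w \<in> U"
  by (induction i) (use assms in auto)

lemma ev_in:
  assumes "subspace U" "\<And>x. x \<in> U \<Longrightarrow> T x \<in> U" "w \<in> U"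
  shows "ev p T w \<in> U"
  unfolding ev_def
  by (intro subspace_sum[OF assms(1)] subspace_scale[OF assms(1)] funpow_in[OF assms(2,3)])

lemma span_image_repr:
  fixes f :: "nat \<Rightarrow> 'a::real_vector"
  assumes "x \<in> span (f ` I)" "finite I"
  shows "\<exists>c. x = (\<Sum>j\<in>I. c j *\<^sub>R f j)"
proof (rule span_induct[OF assms(1)])
  show "subspace {x. \<exists>c. x = (\<Sum>j\<in>I. c j *\<^sub>R f j)}"
  proof (rule subspaceI)
    show "(0::'a) \<in> {x. \<exists>c. x = (\<Sum>j\<in>I. c j *\<^sub>R f j)}" by (auto intro: exI[of _ "\<lambda>_. 0"])
  next
    fix x y assume "x \<in> {x. \<exists>c. x = (\<Sum>j\<in>I. c j *\<^sub>R f j)}" "y \<in> {x. \<exists>c. x = (\<Sum>j\<in>I. c j *\<^sub>R f j)}"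
    then obtain c d where "x = (\<Sum>j\<in>I. c j *\<^sub>R f j)" "y = (\<Sum>j\<in>I. d j *\<^sub>R f j)" by auto
    then have "x + y = (\<Sum>j\<in>I. (c j + d j) *\<^sub>R f j)" by (simp add: scaleR_add_left sum.distrib)
    then show "x + y \<in> {x. \<exists>c. x = (\<Sum>j\<in>I. c j *\<^sub>R f j)}" by (intro CollectI exI[of _ "\<lambda>j. c j + d j"]) simp
  next
    fix a x assume "x \<in> {x. \<exists>c. x = (\<Sum>j\<in>I. c j *\<^sub>R f j)}"
    then obtain c where "x = (\<Sum>j\<in>I. c j *\<^sub>R f j)" by auto
    then have "a *\<^sub>R x = (\<Sum>j\<in>I. (a * c j) *\<^sub>R f j)" by (simp add: scaleR_sum_right)
    then show "a *\<^sub>R x \<in> {x. \<exists>c. x = (\<Sum>j\<in>I. c j *\<^sub>R f j)}" by (intro CollectI exI[of _ "\<lambda>j. a * c j"]) simp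
  qed
next
  fix x assume "x \<in> f ` I"
  then obtain j0 where j0: "j0 \<in> I" "x = f j0" by auto
  have "(\<Sum>j\<in>I. (if j = j0 then 1 else 0) *\<^sub>R f j) = f j0"
    using j0(1) assms(2) by (simp add: if_distrib[of "\<lambda>c. c *\<^sub>R _"] sum.delta cong: if_cong)
  then show "\<exists>c. x = (\<Sum>j\<in>I. c j *\<^sub>R f j)" using j0 by metis
qed

lemma ev_monom: "ev (monom a j) T w = a *\<^sub>R (T^^j) w"
proof -
  have "ev (monom a j) T w = (\<Sum>i\<le>j. coeff (monom a j) i *\<^sub>R (T^^i) w)"
    by (rule ev_bound) (simp add: degree_monom_le)
  also have "\<dots> = a *\<^sub>R (T^^j) w"
    by (simp add: coeff_monom if_distrib[of "\<lambda>c. c *\<^sub>R _"] cong: if_cong)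
  finally show ?thesis .
qed

lemma ev_sum: "ev (\<Sum>j\<in>A. p j) T w = (\<Sum>j\<in>A. ev (p j) T w)"
proof (induction A rule: infinite_finite_induct)
  case (insert x F)
  then show ?case by (simp add: ev_add)
qed auto

lemma ev_minus: "ev (p - q) T w = ev p T w - ev q T w"
proof -
  have e: "p - q = p + smult (-1) q" by simp
  show ?thesis by (subst e, unfold ev_add ev_smult) simp
qed

lemma exists_annih:
  fixes T :: "'a::euclidean_space \<Rightarrow> 'a"
  shows "\<exists>p. p \<noteq> 0 \<and> ev p T u = 0"
proof -
  define f where "f j = (T^^j) u" for j
  have "\<exists>k. f k \<in> span (f ` {..<k})"
  proof (rule ccontr)
    assume H: "\<not> (\<exists>k. f k \<in> span (f ` {..<k}))"
    have I: "independent (f ` {..<k}) \<and> inj_on f {..<k}" for k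
    proof (induction k)
      case 0 then show ?case by (simp add: independent_empty)
    next
      case (Suc k)
      have nin: "f k \<notin> span (f ` {..<k})" using H by blast
      have nin': "f k \<notin> f ` {..<k}" using nin span_base by metis
      have eq: "f ` {..<Suc k} = insert (f k) (f ` {..<k})" by (simp only: lessThan_Suc image_insert)
      have "independent (f ` {..<Suc k})"
        unfolding eq by (rule independent_insertI[OF nin]) (use Suc.IH in blast)
      moreover have "inj_on f {..<Suc k}"
        unfolding lessThan_Suc using Suc.IH nin' by (simp add: inj_on_insert)
      ultimately show ?case by blast
    qed
    have c1: "card (f ` {..<Suc DIM('a)}) = Suc DIM('a)"
      using card_image[of f "{..<Suc DIM('a)}"] I[of "Suc DIM('a)"] by simp
    have c2: "card (f ` {..<Suc DIM('a)}) \<le> DIM('a)"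
      using independent_bound[of "f ` {..<Suc DIM('a)}"] I[of "Suc DIM('a)"] by blast
    show False using c1 c2 by linarith
  qed
  then obtain k where k: "f k \<in> span (f ` {..<k})" by blast
  then obtain c where c: "f k = (\<Sum>j<k. c j *\<^sub>R f j)"
    using span_image_repr[OF k] by blast
  define p where "p = monom 1 k - (\<Sum>j<k. monom (c j) j)"
  have "coeff p k = 1"
    unfolding p_def by (simp add: coeff_diff coeff_sum coeff_monom)
  then have "p \<noteq> 0" by auto
  moreover have "ev p T u = 0"
    unfolding p_def ev_minus ev_sum ev_monom using c unfolding f_def by simp
  ultimately show ?thesis by blast
qed

lemma rho_add: "map_poly complex_of_real (p + q) = map_poly of_real p + map_poly of_real q"
  by (rule poly_eqI) (simp add: coeff_map_poly)

lemma rho_smult: "map_poly complex_of_real (smult a q) = smult (of_real a) (map_poly of_real q)"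
  by (rule poly_eqI) (simp add: coeff_map_poly)

lemma rho_pCons: "map_poly complex_of_real (pCons a p) = pCons (of_real a) (map_poly of_real p)"
  by (rule poly_eqI) (simp add: coeff_map_poly coeff_pCons split: nat.split)

lemma rho_mult: "map_poly complex_of_real (p * q) = map_poly of_real p * map_poly of_real q"
proof (induction p rule: pCons_induct)
  case 0 then show ?case by simp
next
  case (pCons a p)
  have "map_poly complex_of_real (pCons a p * q) = map_poly of_real (smult a q + pCons 0 (p * q))"
    by simp
  also have "\<dots> = smult (of_real a) (map_poly of_real q) + pCons 0 (map_poly of_real p * map_poly of_real q)"
    by (simp only: rho_add rho_smult rho_pCons pCons.IH) simp
  also have "\<dots> = pCons (of_real a) (map_poly of_real p) * map_poly of_real q"
    by simp
  also have "\<dots> = map_poly complex_of_real (pCons a p) * map_poly of_real q"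
    by (simp add: rho_pCons)
  finally show ?case .
qed

lemma eig_from_poly:
  fixes T :: "'a::euclidean_space \<Rightarrow> 'a"
  assumes lin: "linear T" and sub: "subspace U" and inv: "\<And>x. x \<in> U \<Longrightarrow> T x \<in> U"
  shows "p \<noteq> 0 \<Longrightarrow> w \<in> U \<Longrightarrow> w \<noteq> 0 \<Longrightarrow> ev p T w = 0 \<Longrightarrow> \<exists>lam. restr_eigenvalue T U lam"
proof (induction "degree p" arbitrary: p w rule: less_induct)
  case less
  show ?case
  proof (cases "degree p = 0")
    case True
    have "ev p T w = coeff p 0 *\<^sub>R w" by (simp add: ev_def True)
    moreover have "coeff p 0 \<noteq> 0" using less.prems(1) True
      by (metis leading_coeff_0_iff)
    ultimately show ?thesis using less.prems by simp
  next
    case False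
    have dm: "degree (map_poly complex_of_real p) = degree p"
      by (rule degree_map_poly) simp
    have "\<not> (\<exists>a l. a \<noteq> 0 \<and> l = 0 \<and> map_poly complex_of_real p = pCons a l)"
      using False dm by auto
    then obtain z where z: "poly (map_poly complex_of_real p) z = 0"
      using fundamental_theorem_of_algebra_alt by blast
    define q where "q = (if Im z = 0 then [:-Re z, 1:] else [:(Re z)^2 + (Im z)^2, -2*Re z, 1:])"
    have qz: "poly (map_poly complex_of_real q) z = 0"
    proof (cases "Im z = 0")
      case True
      then have "z = of_real (Re z)" by (simp add: complex_eq_iff)
      then show ?thesis using True unfolding q_def by (simp add: rho_pCons)
    next
      case False
      then show ?thesis unfolding q_def
        by (simp add: rho_pCons complex_eq_iff power2_eq_square algebra_simps)
    qed
    have degq: "degree q = (if Im z = 0 then 1 else 2)" unfolding q_def by simp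
    then have q0: "q \<noteq> 0" by (cases "Im z = 0") auto
    define r where "r = p mod q"
    define s where "s = p div q"
    have pqs: "p = q * s + r" unfolding r_def s_def by (simp add: mult.commute)
    have "poly (map_poly complex_of_real p) z = poly (map_poly complex_of_real q) z * poly (map_poly complex_of_real s) z + poly (map_poly complex_of_real r) z"
      by (subst pqs) (simp add: rho_add rho_mult)
    then have rz: "poly (map_poly complex_of_real r) z = 0" using z qz by simp
    have "r = 0"
    proof (rule ccontr)
      assume "r \<noteq> 0"
      then have dr: "degree r < degree q" using degree_mod_less[OF q0, of p] unfolding r_def by auto
      then have r1: "degree r \<le> 1" using degq by (auto split: if_splits)
      have rr: "r = pCons (coeff r 0) (pCons (coeff r 1) 0)"
        by (rule poly_eqI) (use r1 in \<open>auto simp: coeff_pCons coeff_eq_0 split: nat.split\<close>)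
      have "poly (map_poly complex_of_real r) z = of_real (coeff r 0) + of_real (coeff r 1) * z"
        by (subst rr) (simp add: rho_pCons)
      with rz have e: "coeff r 0 + coeff r 1 * Re z = 0" "coeff r 1 * Im z = 0"
        by (auto simp: complex_eq_iff)
      have "coeff r 1 = 0"
      proof (cases "Im z = 0")
        case True
        then have "degree r = 0" using dr degq by simp
        then show ?thesis by (simp add: coeff_eq_0)
      next
        case False then show ?thesis using e(2) by simp
      qed
      then have "coeff r 0 = 0" using e(1) by simp
      then have "r = 0" using \<open>coeff r 1 = 0\<close> by (subst rr) simp
      then show False using \<open>r \<noteq> 0\<close> by simp
    qed
    then have pqs': "p = q * s" using pqs by simp
    then have s0: "s \<noteq> 0" using less.prems(1) by auto
    have degs: "degree s < degree p"
      using pqs' degree_mult_eq[OF q0 s0] degq by (auto split: if_splits)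
    define w' where "w' = ev s T w"
    have w'U: "w' \<in> U" unfolding w'_def using ev_in[of U T w s, OF sub] inv less.prems(2) by blast
    show ?thesis
    proof (cases "w' = 0")
      case True
      then show ?thesis using less.hyps[OF degs s0 less.prems(2,3)] unfolding w'_def by blast
    next
      case w'0: False
      have evq: "ev q T w' = 0"
        using less.prems(4) pqs' ev_mult[OF lin, of q s w] unfolding w'_def by simp
      show ?thesis
      proof (cases "Im z = 0")
        case True
        then have "ev q T w' = (- Re z) *\<^sub>R w' + T w'"
          unfolding q_def by (simp add: ev_pCons[OF lin] linear_0[OF lin])
        with evq have "T w' = Re z *\<^sub>R w'" by (simp add: algebra_simps)
        then have "restr_eigenvalue T U (complex_of_real (Re z))"
          unfolding restr_eigenvalue_def using w'U w'0 linear_0[OF lin]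
          by (intro exI[of _ w'] exI[of _ 0]) (simp add: subspace_0[OF sub])
        then show ?thesis by blast
      next
        case False
        let ?a = "Re z" and ?b = "Im z"
        have "ev q T w' = (?a^2 + ?b^2) *\<^sub>R w' + T ((-2 * ?a) *\<^sub>R w' + T w')"
          unfolding q_def using False by (simp add: ev_pCons[OF lin] linear_0[OF lin])
        also have "\<dots> = (?a^2 + ?b^2) *\<^sub>R w' + (-2 * ?a) *\<^sub>R T w' + T (T w')"
          by (simp only: linear_add[OF lin] linear_scale[OF lin]) (simp add: algebra_simps)
        finally have TT: "T (T w') = (2 * ?a) *\<^sub>R T w' - (?a^2 + ?b^2) *\<^sub>R w'"
          using evq by (simp add: algebra_simps)
        define u where "u = T w' - ?a *\<^sub>R w'"
        define v where "v = ?b *\<^sub>R w'"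
        have TT2: "T (T w') = ?a *\<^sub>R T w' + ?a *\<^sub>R T w' - (?a^2 + ?b^2) *\<^sub>R w'"
          using TT by (simp add: scaleR_add_left[symmetric])
        have "T u = Re z *\<^sub>R u - Im z *\<^sub>R v"
          unfolding u_def v_def using TT2
          by (simp add: linear_diff[OF lin] linear_scale[OF lin] algebra_simps power2_eq_square)
        moreover have "T v = Im z *\<^sub>R u + Re z *\<^sub>R v"
          unfolding u_def v_def
          by (simp add: linear_scale[OF lin] algebra_simps)
        moreover have "u \<in> U" "v \<in> U" unfolding u_def v_def
          using w'U inv sub by (auto intro: subspace_diff subspace_scale)
        moreover have "v \<noteq> 0" unfolding v_def using False w'0 by simp
        ultimately have "restr_eigenvalue T U z"
          unfolding restr_eigenvalue_def by blast
        then show ?thesis by blast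
      qed
    qed
  qed
qed

lemma eig_exists:
  fixes T :: "'a::euclidean_space \<Rightarrow> 'a"
  assumes lin: "linear T" and sub: "subspace U" and inv: "\<And>x. x \<in> U \<Longrightarrow> T x \<in> U"
    and ne: "U \<noteq> {0}"
  shows "\<exists>lam. restr_eigenvalue T U lam"
proof -
  obtain w where w: "w \<in> U" "w \<noteq> 0" using ne subspace_0[OF sub] by blast
  obtain p where "p \<noteq> 0" "ev p T w = 0" using exists_annih by blast
  then show ?thesis using eig_from_poly[OF lin sub inv] w by blast
qed

lemma dim_image_less:
  fixes T :: "'a::euclidean_space \<Rightarrow> 'a"
  assumes lin: "linear T" and sub: "subspace S" and w: "w \<in> S" "w \<noteq> 0" "T w = 0"
  shows "dim (T ` S) < dim S"
proof -
  have "independent {w}" using w by (intro independent_insertI) (auto simp: independent_empty)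
  then obtain B where B: "{w} \<subseteq> B" "B \<subseteq> S" "independent B" "S \<subseteq> span B"
    using maximal_independent_subset_extend[of "{w}" S] w by auto
  have fin: "finite B" using independent_bound B(3) by blast
  have spB: "span B = S" using B sub by (simp add: span_subspace)
  have dS: "dim S = card B"
  proof -
    have "span S = S" using sub by (simp add: span_eq_iff)
    then show ?thesis using dim_span_eq_card_independent[OF B(3)] spB by simp
  qed
  have "T ` B = insert 0 (T ` (B - {w}))" using B(1) w by auto
  then have "span (T ` B) = span (T ` (B - {w}))" by simp
  then have "T ` S \<subseteq> span (T ` (B - {w}))"
    using linear_span_image[OF lin, of B] spB by simp
  then have "dim (T ` S) \<le> card (T ` (B - {w}))"
    using dim_le_card fin by blast
  also have "\<dots> \<le> card (B - {w})" using fin by (simp add: card_image_le)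
  also have "\<dots> < card B" using fin B(1) by (intro card_Diff1_less) auto
  finally show ?thesis using dS by simp
qed

lemma linear_funpow:
  fixes T :: "'a::real_vector \<Rightarrow> 'a"
  shows "linear T \<Longrightarrow> linear (T^^k)"
proof (induction k)
  case 0 then show ?case by (simp add: id_def linear_iff)
next
  case (Suc k) then show ?case using linear_compose[of "T^^k" T] by (simp add: o_def)
qed

lemma nilp:
  fixes T :: "'a::euclidean_space \<Rightarrow> 'a"
  assumes lin: "linear T" and sub: "subspace U" and inv: "\<And>x. x \<in> U \<Longrightarrow> T x \<in> U"
    and spec: "restr_spectrum T U \<subseteq> {0}"
  shows "\<forall>u\<in>U. (T^^DIM('a)) u = 0"
proof -
  define Uk where "Uk k = (T^^k) ` U" for k
  have subk: "subspace (Uk k)" for k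
    unfolding Uk_def by (rule linear_subspace_image[OF linear_funpow[OF lin] sub])
  have Ukin: "Uk k \<subseteq> U" for k
  proof
    fix x assume "x \<in> Uk k"
    then obtain y where y: "y \<in> U" "x = (T^^k) y" unfolding Uk_def by blast
    show "x \<in> U" using funpow_in[of U T y k] inv y by simp
  qed
  have UkS: "Uk (Suc k) = T ` Uk k" for k
    unfolding Uk_def by (simp add: image_comp)
  have step: "dim (Uk (Suc k)) < dim (Uk k)" if ne: "Uk k \<noteq> {0}" for k
  proof -
    have invk: "T x \<in> Uk k" if xin: "x \<in> Uk k" for x
    proof -
      obtain y where y: "y \<in> U" "x = (T^^k) y" using xin unfolding Uk_def by blast
      have "T x = (T^^k) (T y)" using y(2) by (simp add: funpow_swap1)
      then show ?thesis unfolding Uk_def using inv[OF y(1)] by blast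
    qed
    obtain lam where "restr_eigenvalue T (Uk k) lam"
      using eig_exists[OF lin subk invk ne] by blast
    then obtain u v where uv: "u \<in> Uk k" "v \<in> Uk k" "u \<noteq> 0 \<or> v \<noteq> 0"
        "T u = Re lam *\<^sub>R u - Im lam *\<^sub>R v" "T v = Im lam *\<^sub>R u + Re lam *\<^sub>R v"
      unfolding restr_eigenvalue_def by blast
    then have "restr_eigenvalue T U lam"
      unfolding restr_eigenvalue_def using Ukin by blast
    then have "lam = 0" using spec unfolding restr_spectrum_def by blast
    then have "T u = 0" "T v = 0" using uv by auto
    then obtain w where "w \<in> Uk k" "w \<noteq> 0" "T w = 0" using uv by blast
    then show ?thesis using dim_image_less[OF lin subk] UkS by simp
  qed
  have claim: "Uk k = {0} \<or> dim (Uk k) + k \<le> dim U" for k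
  proof (induction k)
    case 0 then show ?case by (simp add: Uk_def)
  next
    case (Suc k)
    show ?case
    proof (cases "Uk k = {0}")
      case True
      then show ?thesis using UkS linear_0[OF lin] by simp
    next
      case False
      then show ?thesis using Suc step[OF False] by auto
    qed
  qed
  have "Uk DIM('a) = {0}"
  proof (rule ccontr)
    assume ne: "Uk DIM('a) \<noteq> {0}"
    have "\<not> Uk DIM('a) \<subseteq> {0}" using ne subspace_0[OF subk] by blast
    then have d0: "dim (Uk DIM('a)) \<noteq> 0"
      using dim_eq_0[of "Uk DIM('a)"] by blast
    have dU: "dim U \<le> DIM('a)" by (rule dim_subset_UNIV)
    have "dim (Uk DIM('a)) + DIM('a) \<le> dim U" using claim[of "DIM('a)"] ne by blast
    then show False using d0 dU by linarith
  qed
  then show ?thesis unfolding Uk_def by auto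
qed

lemma zero_pair:
  fixes u v :: "'a::real_vector"
  assumes "a *\<^sub>R u - b *\<^sub>R v = 0" "b *\<^sub>R u + a *\<^sub>R v = 0" "u \<noteq> 0 \<or> v \<noteq> 0"
  shows "a = 0 \<and> b = 0"
proof -
  have "(a*a + b*b) *\<^sub>R u = a *\<^sub>R (a *\<^sub>R u - b *\<^sub>R v) + b *\<^sub>R (b *\<^sub>R u + a *\<^sub>R v)"
    by (simp add: algebra_simps)
  then have eu: "(a*a + b*b) *\<^sub>R u = 0" using assms by simp
  have "(a*a + b*b) *\<^sub>R v = a *\<^sub>R (b *\<^sub>R u + a *\<^sub>R v) - b *\<^sub>R (a *\<^sub>R u - b *\<^sub>R v)"
    by (simp add: algebra_simps)
  then have ev: "(a*a + b*b) *\<^sub>R v = 0" using assms by simp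
  have "a*a + b*b = 0" using eu ev assms(3) by auto
  then show ?thesis by (simp add: sum_squares_eq_zero_iff)
qed

lemma eig_pow:
  fixes T :: "'a::real_vector \<Rightarrow> 'a"
  assumes lin: "linear T" and e: "T u = Re l *\<^sub>R u - Im l *\<^sub>R v" "T v = Im l *\<^sub>R u + Re l *\<^sub>R v"
  shows "(T^^m) u = Re (l^m) *\<^sub>R u - Im (l^m) *\<^sub>R v \<and> (T^^m) v = Im (l^m) *\<^sub>R u + Re (l^m) *\<^sub>R v"
proof (induction m)
  case 0 then show ?case by simp
next
  case (Suc m)
  have "(T^^Suc m) u = T ((T^^m) u)" by simp
  also have "\<dots> = T (Re (l^m) *\<^sub>R u - Im (l^m) *\<^sub>R v)" using Suc by (simp only:)
  also have "\<dots> = Re (l^m) *\<^sub>R T u - Im (l^m) *\<^sub>R T v"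
    by (simp only: linear_diff[OF lin] linear_scale[OF lin])
  also have "\<dots> = Re (l^Suc m) *\<^sub>R u - Im (l^Suc m) *\<^sub>R v"
    by (simp only: e) (simp add: algebra_simps)
  finally have 1: "(T^^Suc m) u = Re (l^Suc m) *\<^sub>R u - Im (l^Suc m) *\<^sub>R v" .
  have "(T^^Suc m) v = T ((T^^m) v)" by simp
  also have "\<dots> = T (Im (l^m) *\<^sub>R u + Re (l^m) *\<^sub>R v)" using Suc by (simp only:)
  also have "\<dots> = Im (l^m) *\<^sub>R T u + Re (l^m) *\<^sub>R T v"
    by (simp only: linear_add[OF lin] linear_scale[OF lin])
  also have "\<dots> = Im (l^Suc m) *\<^sub>R u + Re (l^Suc m) *\<^sub>R v"
    by (simp only: e) (simp add: algebra_simps)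
  finally show ?case using 1 by simp
qed

lemma powg:
  assumes "semigroup g" "x \<ge> 0"
  shows "g x ^^ m = g (real m * x)"
proof (induction m)
  case 0 then show ?case using assms(1) by (simp add: semigroup_def)
next
  case (Suc m)
  have "g (real (Suc m) * x) = g (x + real m * x)" by (simp add: algebra_simps)
  also have "\<dots> = g x \<circ> g (real m * x)" using assms by (simp add: semigroup_def)
  finally show ?case using Suc by simp
qed

theorem mainTheorem4:
  fixes g :: "real \<Rightarrow> 'a::euclidean_space \<Rightarrow> 'a"
    and n :: nat and Vs :: "nat \<Rightarrow> 'a set" and i :: nat and x0 :: real
  assumes "semigroup g"
    and "SRPD g n Vs"
    and "i \<in> {1..n}"
    and "x0 > 0"
    and "restr_eigenvalue (g x0) (Vs i) 0"
  shows "\<forall>x>0. restr_spectrum (g x) (Vs i) = {0} \<and> Vs i \<subseteq> {v. g x v = 0}"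
proof -
  have lin: "\<And>x. x \<ge> 0 \<Longrightarrow> linear (g x)" using assms(1) by (simp add: semigroup_def)
  have gadd: "\<And>x y. x \<ge> 0 \<Longrightarrow> y \<ge> 0 \<Longrightarrow> g (x + y) = g x \<circ> g y"
    using assms(1) by (simp add: semigroup_def)
  define W where "W = Vs i"
  have sub: "subspace W" using assms(2,3) unfolding SRPD_def direct_sum_def W_def by blast
  have ne: "W \<noteq> {0}" using assms(2,3) unfolding SRPD_def W_def by blast
  have inv: "\<And>x u. x \<ge> 0 \<Longrightarrow> u \<in> W \<Longrightarrow> g x u \<in> W"
    using assms(2,3) unfolding SRPD_def W_def by blast
  have ty: "first_type g W \<or> second_type g W"
    using assms(2,3) unfolding SRPD_def W_def by blast
  have z0: "0 \<in> restr_spectrum (g x0) W" using assms(5) unfolding restr_spectrum_def W_def by simp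
  have spec0: "restr_spectrum (g x0) W \<subseteq> {0}"
    using ty
  proof
    assume "first_type g W"
    then have "\<exists>r\<ge>0. restr_spectrum (g x0) W = {complex_of_real r}"
      using assms(4) unfolding first_type_def by (simp add: less_imp_le)
    then obtain r where "restr_spectrum (g x0) W = {complex_of_real r}" by blast
    then show ?thesis using z0 by auto
  next
    assume "second_type g W"
    then obtain lam where "\<forall>x\<ge>0. restr_spectrum (g x) W \<subseteq> {lam x, cnj (lam x)}"
      unfolding second_type_def by blast
    then have "restr_spectrum (g x0) W \<subseteq> {lam x0, cnj (lam x0)}"
      using assms(4) by (simp add: less_imp_le)
    moreover have "lam x0 = 0" using z0 calculation
      by (metis complex_cnj_zero_iff empty_iff insert_iff subsetD)
    ultimately show ?thesis by simp
  qed
  let ?D = "DIM('a)"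
  have Dpos: "real ?D > 0" by simp
  have killD: "\<forall>u\<in>W. g (real ?D * x0) u = 0"
    using nilp[OF lin[of x0] sub inv[of x0] spec0] assms(4) powg[OF assms(1), of x0 ?D] by simp
  have killge: "g t u = 0" if "t \<ge> real ?D * x0" "u \<in> W" for t u
  proof -
    have "g t = g (t - real ?D * x0) \<circ> g (real ?D * x0)"
      using gadd[of "t - real ?D * x0" "real ?D * x0"] that assms(4) by simp
    then show ?thesis using killD that linear_0[OF lin[of "t - real ?D * x0"]] by simp
  qed
  have kill: "\<forall>u\<in>W. g x u = 0" if x: "x > 0" for x
  proof -
    define s where "s = x / real ?D"
    have s: "s > 0" unfolding s_def using x by simp
    have specs: "restr_spectrum (g s) W \<subseteq> {0}"
    proof
      fix l assume "l \<in> restr_spectrum (g s) W"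
      then obtain u v where uv: "u \<in> W" "v \<in> W" "u \<noteq> 0 \<or> v \<noteq> 0"
        "g s u = Re l *\<^sub>R u - Im l *\<^sub>R v" "g s v = Im l *\<^sub>R u + Re l *\<^sub>R v"
        unfolding restr_spectrum_def restr_eigenvalue_def by blast
      obtain m :: nat where m: "real ?D * x0 / s \<le> real m" using real_arch_simple by blast
      then have mle: "real ?D * x0 \<le> real m * s" using s by (simp add: field_simps)
      have p: "(g s ^^ m) u = Re (l^m) *\<^sub>R u - Im (l^m) *\<^sub>R v"
              "(g s ^^ m) v = Im (l^m) *\<^sub>R u + Re (l^m) *\<^sub>R v"
        using eig_pow[OF lin[of s] uv(4,5)] s by auto
      have "(g s ^^ m) u = 0" "(g s ^^ m) v = 0"
        using powg[OF assms(1), of s m] s killge[OF mle] uv(1,2) by auto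
      then have "Re (l^m) *\<^sub>R u - Im (l^m) *\<^sub>R v = 0" "Im (l^m) *\<^sub>R u + Re (l^m) *\<^sub>R v = 0"
        using p by (simp_all only:)
      then have "Re (l^m) = 0 \<and> Im (l^m) = 0"
        using zero_pair[of "Re (l^m)" u "Im (l^m)" v] uv(3) by blast
      then have "l^m = 0" by (simp add: complex_eq_iff)
      then show "l \<in> {0}" by simp
    qed
    have "\<forall>u\<in>W. (g s ^^ ?D) u = 0"
      using nilp[OF lin[of s] sub inv[of s] specs] s by simp
    moreover have "g s ^^ ?D = g x"
      using powg[OF assms(1), of s ?D] s unfolding s_def by simp
    ultimately show ?thesis by simp
  qed
  show ?thesis
  proof (intro allI impI conjI)
    fix x :: real assume x: "x > 0"
    show "Vs i \<subseteq> {v. g x v = 0}" using kill[OF x] unfolding W_def by auto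
    show "restr_spectrum (g x) (Vs i) = {0}"
    proof
      show "restr_spectrum (g x) (Vs i) \<subseteq> {0}"
      proof
        fix l assume "l \<in> restr_spectrum (g x) (Vs i)"
        then obtain u v where uv: "u \<in> W" "v \<in> W" "u \<noteq> 0 \<or> v \<noteq> 0"
          "g x u = Re l *\<^sub>R u - Im l *\<^sub>R v" "g x v = Im l *\<^sub>R u + Re l *\<^sub>R v"
          unfolding restr_spectrum_def restr_eigenvalue_def W_def by auto
        have k: "g x u = 0" "g x v = 0" using kill[OF x] uv(1,2) by blast+
        have "Re l *\<^sub>R u - Im l *\<^sub>R v = 0" "Im l *\<^sub>R u + Re l *\<^sub>R v = 0"
          using uv(4,5) k by (simp_all only:)
        then have "Re l = 0 \<and> Im l = 0"
          using zero_pair[of "Re l" u "Im l" v] uv(3) by blast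
        then show "l \<in> {0}" by (simp add: complex_eq_iff)
      qed
    next
      obtain w where w: "w \<in> W" "w \<noteq> 0" using ne subspace_0[OF sub] by blast
      have "restr_eigenvalue (g x) (Vs i) 0"
        unfolding restr_eigenvalue_def W_def[symmetric]
        using w kill[OF x] subspace_0[OF sub] by (intro exI[of _ w] exI[of _ 0]) auto
      then show "{0} \<subseteq> restr_spectrum (g x) (Vs i)" unfolding restr_spectrum_def by simp
    qed
  qed
qed

end
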